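(* Assume $\|\hat F'(y)-\hat F'(x)\|_F\le L_{\hat F}\|y-x\|$ for all $x,y\in\mathcal F$, and that $\|\hat F'(x)\|\le M_{\hat F}$ for all $x\in\mathcal F$, for some $M_{\hat F}>0$. Let $\{x_k\}$ be computed by Scheme 1 with $$x_{k+1}=x_k-\eta_k\big(\hat F'(x_k)^*\hat F'(x_k)+\tau_kL_kI_n\big)^{-1}\hat F'(x_k)^*\hat F(x_k),$$ where $\tau_k>0$, $\eta_k>0$ and $\eta_k(2-\eta_k)\ge c>0$ for all $k\in\mathbb Z_+$. Then for $k\in\mathbb N$: $$\min_{i\in\{0,\dots,k-1\}}\|\nabla\hat f_2(x_i)\|^2\le\frac{8\big(2L_{\hat F}\max_{i\in\{0,\dots,k-1\}}\tau_i+M_{\hat F}^2\big)}{\eta(2-\eta)k}\sum_{i=0}^{k-1}\Big(\frac12\big(\tau_i-\hat f_1(x_i)\big)^2+\tau_i\big(\hat f_1(x_i)-\hat f_1(x_{i+1})\big)\Big),$$ where $\eta\in\operatorname{Argmin}_{k\in\mathbb Z_+}\{\eta_k(2-\eta_k)\}$.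
   Context: Let $F:\mathbb R^n\to\mathbb R^m$ be smooth, $\hat F=\frac1{\sqrt m}F$ with Jacobian $\hat F'(x)$ and its transpose $\hat F'(x)^*$; Euclidean norms, spectral norm for matrices, $\|\cdot\|_F$ Frobenius norm. $\hat f_1(x)=\|\hat F(x)\|$, $\hat f_2=\hat f_1^2$, $\psi_{x,L,\tau}(y)=\frac\tau2+\frac{\|\hat F(x)+\hat F'(x)(y-x)\|^2}{2\tau}+\frac L2\|y-x\|^2$. $\mathcal F$ closed convex with nonempty interior, $\mathcal L(\hat f_1(x_0))\subseteq\mathcal F$ and the generated sequence stays in $\mathcal F$. Scheme 1 (with the displayed update): input $x_0$, $L\in(0,L_{\hat F}]$, $L_0=L$; at iteration $k$ choose $\tau_k$, compute $x_{k+1}$; if $\hat f_1(x_{k+1})>\psi_{x_k,L_k,\tau_k}(x_{k+1})$, set $L_k:=\min\{2L_k,2L_{\hat F}\}$ and recompute; otherwise $L_{k+1}=\max\{L_k/2,L\}$. *)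

theory Defs
  imports "HOL-Analysis.Analysis"
begin

definition Fhat :: "(real^'n \<Rightarrow> real^'m) \<Rightarrow> real^'n \<Rightarrow> real^'m" where
  "Fhat F x = (1 / sqrt (real CARD('m))) *\<^sub>R F x"

definition Jhat :: "(real^'n \<Rightarrow> real^'n^'m) \<Rightarrow> real^'n \<Rightarrow> real^'n^'m" where
  "Jhat J x = (1 / sqrt (real CARD('m))) *\<^sub>R J x"

definition frob_norm :: "real^'n^'m \<Rightarrow> real" where
  "frob_norm A = sqrt (\<Sum>i\<in>UNIV. \<Sum>j\<in>UNIV. (A $ i $ j)^2)"

definition spec_norm :: "real^'n^'m \<Rightarrow> real" where
  "spec_norm A = onorm (\<lambda>v. A *v v)"

definition grad :: "(real^'n \<Rightarrow> real) \<Rightarrow> real^'n \<Rightarrow> real^'n" where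
  "grad f x = (THE g. (f has_derivative (\<lambda>h. g \<bullet> h)) (at x))"

definition f1 :: "(real^'n \<Rightarrow> real^'m) \<Rightarrow> real^'n \<Rightarrow> real" where
  "f1 F x = norm (Fhat F x)"

definition f2 :: "(real^'n \<Rightarrow> real^'m) \<Rightarrow> real^'n \<Rightarrow> real" where
  "f2 F x = (f1 F x)^2"

definition psi :: "(real^'n \<Rightarrow> real^'m) \<Rightarrow> (real^'n \<Rightarrow> real^'n^'m)
    \<Rightarrow> real^'n \<Rightarrow> real \<Rightarrow> real \<Rightarrow> real^'n \<Rightarrow> real" where
  "psi F J x L \<tau> y = \<tau> / 2 + (norm (Fhat F x + Jhat J x *v (y - x)))^2 / (2 * \<tau>)
      + L / 2 * (norm (y - x))^2"

definition upd :: "(real^'n \<Rightarrow> real^'m) \<Rightarrow> (real^'n \<Rightarrow> real^'n^'m)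
    \<Rightarrow> real^'n \<Rightarrow> real \<Rightarrow> real \<Rightarrow> real \<Rightarrow> real^'n" where
  "upd F J x L \<tau> \<eta> = x - \<eta> *\<^sub>R
     (matrix_inv (transpose (Jhat J x) ** Jhat J x + (\<tau> * L) *\<^sub>R mat 1)
        *v (transpose (Jhat J x) *v Fhat F x))"

text \<open>j-th trial value of L_k in the backtracking loop, starting from L0:
  each rejection sets L := min (2 L) (2 LF).\<close>
definition trialL :: "real \<Rightarrow> real \<Rightarrow> nat \<Rightarrow> real" where
  "trialL LF L0 j = ((\<lambda>t. min (2 * t) (2 * LF)) ^^ j) L0"

text \<open>A run of Scheme 1 with input x 0, L, constant LF; tau k, eta k the chosen
  parameters and Lk k the finally accepted value of L_k at iteration k.\<close>
definition scheme1 :: "(real^'n \<Rightarrow> real^'m) \<Rightarrow> (real^'n \<Rightarrow> real^'n^'m) \<Rightarrow> real \<Rightarrow> real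
    \<Rightarrow> (nat \<Rightarrow> real^'n) \<Rightarrow> (nat \<Rightarrow> real) \<Rightarrow> (nat \<Rightarrow> real) \<Rightarrow> (nat \<Rightarrow> real) \<Rightarrow> bool" where
  "scheme1 F J LF L x tau eta Lk \<longleftrightarrow>
     (\<forall>k. \<exists>j.
        (let L0 = (if k = 0 then L else max (Lk (k - 1) / 2) L) in
          Lk k = trialL LF L0 j \<and>
          (\<forall>i<j. f1 F (upd F J (x k) (trialL LF L0 i) (tau k) (eta k))
                 > psi F J (x k) (trialL LF L0 i) (tau k)
                     (upd F J (x k) (trialL LF L0 i) (tau k) (eta k)))) \<and>
        x (Suc k) = upd F J (x k) (Lk k) (tau k) (eta k) \<and>
        f1 F (x (Suc k)) \<le> psi F J (x k) (Lk k) (tau k) (x (Suc k)))"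

end

theory Submission
  imports Defs
begin

declare dot_lmul_matrix[simp]
lemma tdot: "(transpose (J::real^'n^'m) *v w) \<bullet> v = w \<bullet> (J *v v)"
  by (simp add: dot_lmul_matrix)

lemma key:
  fixes J :: "real^'n^'m" and r :: "real^'m"
  assumes t: "t > 0" and Jb: "\<And>v. norm (J *v v) \<le> M * norm v" and M: "M \<ge> 0"
  defines "g \<equiv> transpose J *v r" and "A \<equiv> transpose J ** J + t *\<^sub>R mat 1"
    and "u \<equiv> matrix_inv (transpose J ** J + t *\<^sub>R mat 1) *v (transpose J *v r)"
  shows "norm g ^2 \<le> (M^2 + t) * (g \<bullet> u)" "g \<bullet> u \<ge> 0"
   "norm (r + J *v (- (\<eta> *\<^sub>R u)))^2 + t * norm (- (\<eta> *\<^sub>R u))^2 = norm r^2 - \<eta>*(2-\<eta>)*(g \<bullet> u)"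
proof -
  have Av: "A *v v = transpose J *v (J *v v) + t *\<^sub>R v" for v
    by (simp add: A_def matrix_vector_mult_add_rdistrib matrix_vector_mul_assoc
        scaleR_matrix_vector_assoc[symmetric])
  have quad: "(A *v v) \<bullet> v = norm (J *v v)^2 + t * norm v ^2" for v
    by (simp add: Av inner_add_left tdot power2_norm_eq_inner)
  have "\<forall>v. A *v v = 0 \<longrightarrow> v = 0"
  proof (intro allI impI)
    fix v assume "A *v v = 0"
    then have "norm (J *v v)^2 + t * norm v ^2 = 0" using quad[of v] by simp
    then have "t * norm v ^2 = 0"
      by (smt (verit) t zero_le_power2 mult_nonneg_nonneg)
    then show "v = 0" using t by simp
  qed
  then have "invertible A" by (simp add: invertible_left_inverse matrix_left_invertible_ker)
  then have "A ** matrix_inv A = mat 1"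
    unfolding invertible_def matrix_inv_def by (rule someI_ex[THEN conjunct1])
  then have Au: "A *v u = g" by (simp only: u_def A_def[symmetric] g_def[symmetric] matrix_vector_mul_assoc matrix_vector_mul_lid)
  have Jt: "norm (transpose J *v w) \<le> M * norm w" for w
  proof -
    define z where "z = transpose J *v w"
    have "norm z ^2 = w \<bullet> (J *v z)" by (simp only: power2_norm_eq_inner z_def tdot)
    also have "\<dots> \<le> norm w * norm (J *v z)" by (rule norm_cauchy_schwarz)
    also have "\<dots> \<le> norm w * (M * norm z)" by (rule mult_left_mono[OF Jb]) simp
    finally have "norm z * norm z \<le> (M * norm w) * norm z" by (simp add: power2_eq_square algebra_simps)
    then show ?thesis unfolding z_def[symmetric]
      by (cases "norm z = 0") (auto simp: mult_le_cancel_right M)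
  qed
  have gu: "g \<bullet> u = norm (J *v u)^2 + t * norm u ^2" using quad[of u] Au by simp
  show "g \<bullet> u \<ge> 0" unfolding gu using t by simp
  define a where "a = norm (transpose J *v (J *v u))"
  define b where "b = norm (J *v u)"
  define c where "c = norm u"
  have ab: "a \<le> M * b" unfolding a_def b_def by (rule Jt)
  have bc: "b \<le> M * c" unfolding b_def c_def by (rule Jb)
  have a0: "a \<ge> 0" "b \<ge> 0" "c \<ge> 0" by (auto simp: a_def b_def c_def)
  have "norm g ^2 = norm (transpose J *v (J *v u) + t *\<^sub>R u)^2" using Au Av by simp
  also have "\<dots> = a^2 + 2 * t * b^2 + t^2 * c^2"
  proof -
    define p where "p = transpose J *v (J *v u)"
    have pu: "p \<bullet> u = b^2" by (simp only: p_def tdot b_def power2_norm_eq_inner)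
    have up: "u \<bullet> p = b^2" using pu by (simp only: inner_commute)
    have aa: "a^2 = p \<bullet> p" by (simp only: a_def p_def power2_norm_eq_inner)
    have cc: "c^2 = u \<bullet> u" by (simp only: c_def power2_norm_eq_inner)
    have "norm (p + t *\<^sub>R u)^2 = (p + t *\<^sub>R u) \<bullet> (p + t *\<^sub>R u)" by (simp only: power2_norm_eq_inner)
    also have "\<dots> = p \<bullet> p + 2 * t * (p \<bullet> u) + t^2 * (u \<bullet> u)"
      using up by (simp add: inner_add_left inner_add_right pu power2_eq_square algebra_simps)
    finally show ?thesis unfolding p_def[symmetric] aa cc pu by simp
  qed
  also have "\<dots> \<le> (M^2 + t) * (b^2 + t * c^2)"
  proof -
    have "a^2 \<le> (M*b)^2" using ab a0 by (intro power_mono) auto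
    moreover have "b^2 \<le> (M*c)^2" using bc a0 by (intro power_mono) auto
    ultimately have h1: "a^2 \<le> M^2 * b^2" and h2: "t * b^2 \<le> t * (M^2 * c^2)"
      using t by (auto simp: power_mult_distrib intro: mult_left_mono)
    have e: "(M^2 + t) * (b^2 + t * c^2) = M^2 * b^2 + t * (M^2 * c^2) + t * b^2 + t^2 * c^2"
      by (simp add: algebra_simps power2_eq_square)
    show ?thesis unfolding e using h1 h2 by linarith
  qed
  finally show "norm g ^2 \<le> (M^2 + t) * (g \<bullet> u)" by (simp add: gu b_def c_def)
  have rw: "r \<bullet> (J *v u) = g \<bullet> u" by (simp add: g_def tdot)
  have wr: "(J *v u) \<bullet> r = g \<bullet> u" using rw by (simp only: inner_commute)
  have e1: "J *v (- (\<eta> *\<^sub>R u)) = (-\<eta>) *\<^sub>R (J *v u)"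
    by (simp only: scaleR_minus_left[symmetric] matrix_vector_mult_scaleR)
  have "norm (r + (-\<eta>) *\<^sub>R (J *v u))^2 = (r + (-\<eta>) *\<^sub>R (J *v u)) \<bullet> (r + (-\<eta>) *\<^sub>R (J *v u))"
    by (simp only: power2_norm_eq_inner)
  also have "\<dots> = r \<bullet> r - 2 * \<eta> * (g \<bullet> u) + \<eta>^2 * ((J *v u) \<bullet> (J *v u))"
    using rw wr by (simp add: inner_add_left inner_add_right power2_eq_square algebra_simps)
  finally have e2: "norm (r + J *v (- (\<eta> *\<^sub>R u)))^2 = norm r^2 - 2 * \<eta> * (g \<bullet> u) + \<eta>^2 * norm (J *v u)^2"
    unfolding e1 by (simp only: power2_norm_eq_inner)
  have e3: "norm (- (\<eta> *\<^sub>R u))^2 = \<eta>^2 * norm u^2"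
    by (simp add: power_mult_distrib)
  show "norm (r + J *v (- (\<eta> *\<^sub>R u)))^2 + t * norm (- (\<eta> *\<^sub>R u))^2 = norm r^2 - \<eta>*(2-\<eta>)*(g \<bullet> u)"
    unfolding e2 e3 gu by (simp add: algebra_simps power2_eq_square)
qed

lemma grad_f2:
  fixes F :: "real^'n \<Rightarrow> real^'m" and J :: "real^'n \<Rightarrow> real^'n^'m"
  assumes deriv: "\<And>y. (F has_derivative (\<lambda>h. J y *v h)) (at y)"
  shows "grad (f2 F) y = 2 *\<^sub>R (transpose (Jhat J y) *v Fhat F y)"
proof -
  define c where "c = 1 / sqrt (real CARD('m))"
  define G where "G = 2 *\<^sub>R (transpose (Jhat J y) *v Fhat F y)"
  have FF: "Fhat F = (\<lambda>x. c *\<^sub>R F x)" by (simp add: Fhat_def c_def fun_eq_iff)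
  have dF: "(Fhat F has_derivative (\<lambda>h. Jhat J y *v h)) (at y)"
    unfolding FF using has_derivative_scaleR_right[OF deriv[of y], of c]
    by (simp add: Jhat_def c_def[symmetric] scaleR_matrix_vector_assoc)
  have f2e: "f2 F = (\<lambda>x. Fhat F x \<bullet> Fhat F x)"
    by (simp add: fun_eq_iff f2_def f1_def power2_norm_eq_inner)
  have d2: "(f2 F has_derivative (\<lambda>h. Fhat F y \<bullet> (Jhat J y *v h) + (Jhat J y *v h) \<bullet> Fhat F y)) (at y)"
    unfolding f2e by (rule has_derivative_inner[OF dF dF])
  have eq: "(\<lambda>h. Fhat F y \<bullet> (Jhat J y *v h) + (Jhat J y *v h) \<bullet> Fhat F y) = (\<lambda>h. G \<bullet> h)"
  proof
    fix h
    have "(transpose (Jhat J y) *v Fhat F y) \<bullet> h = Fhat F y \<bullet> (Jhat J y *v h)" by (rule tdot)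
    then show "Fhat F y \<bullet> (Jhat J y *v h) + (Jhat J y *v h) \<bullet> Fhat F y = G \<bullet> h"
      unfolding G_def inner_scaleR_left by (simp only: inner_commute[of "Jhat J y *v h"])
  qed
  have PG: "(f2 F has_derivative (\<lambda>h. G \<bullet> h)) (at y)" using d2 eq by simp
  show ?thesis unfolding grad_def G_def[symmetric]
  proof (rule the_equality)
    show "(f2 F has_derivative (\<lambda>h. G \<bullet> h)) (at y)" by (rule PG)
    fix g assume "(f2 F has_derivative (\<lambda>h. g \<bullet> h)) (at y)"
    then have "(\<lambda>h. g \<bullet> h) = (\<lambda>h. G \<bullet> h)" using PG by (rule has_derivative_unique)
    then have "g \<bullet> (g - G) = G \<bullet> (g - G)" by meson
    then have "(g - G) \<bullet> (g - G) = 0" by (simp add: inner_diff_left)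
    then show "g = G" by simp
  qed
qed

lemma trial_bnd:
  assumes "L \<le> L0" "L0 \<le> 2 * LF" "L \<le> LF" "0 \<le> L"
  shows "L \<le> trialL LF L0 j \<and> trialL LF L0 j \<le> 2 * LF"
  using assms by (induction j) (auto simp: trialL_def min_def)

lemma Lk_bnd:
  assumes scheme: "scheme1 F J LF L x tau eta Lk" and "0 < L" "L \<le> LF"
  shows "L \<le> Lk k \<and> Lk k \<le> 2 * LF"
proof (induction k)
  case 0
  have "\<exists>j. Lk 0 = trialL LF L j" using scheme[unfolded scheme1_def, rule_format, of 0] by (auto simp: Let_def)
  then obtain j where "Lk 0 = trialL LF L j" by blast
  then show ?case using trial_bnd[of L L LF j] assms(2,3) by simp
next
  case (Suc k)
  have "\<exists>j. Lk (Suc k) = trialL LF (max (Lk k / 2) L) j"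
    using scheme[unfolded scheme1_def, rule_format, of "Suc k"] by (auto simp: Let_def)
  then obtain j where "Lk (Suc k) = trialL LF (max (Lk k / 2) L) j" by blast
  then show ?case using trial_bnd[of L "max (Lk k / 2) L" LF j] assms(2,3) Suc by auto
qed
lemma arith_step:
  fixes \<tau> Lc LF tmax z G f' nr q e0 M :: real
  assumes "\<tau> > 0" "Lc \<le> 2 * LF" "Lc > 0" "\<tau> \<le> tmax" "z \<ge> 0" "G \<le> (M^2 + \<tau> * Lc) * z"
    "f' \<le> \<tau>/2 + (nr^2 - q * z) / (2 * \<tau>)" "e0 \<le> q" "e0 > 0"
  shows "4 * G \<le> 8 * (2 * LF * tmax + M^2) / e0 * ((1/2) * (\<tau> - nr)^2 + \<tau> * (nr - f'))"
proof -
  define S where "S = (1/2) * (\<tau> - nr)^2 + \<tau> * (nr - f')"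
  define \<Lambda> where "\<Lambda> = 2 * LF * tmax + M^2"
  have "\<tau> * f' \<le> \<tau> * (\<tau>/2 + (nr^2 - q * z) / (2 * \<tau>))" using assms by (intro mult_left_mono) auto
  also have "\<dots> = \<tau>^2 / 2 + (nr^2 - q * z) / 2" using assms(1) by (simp add: field_simps power2_eq_square)
  finally have h: "\<tau> * f' \<le> \<tau>^2 / 2 + (nr^2 - q * z) / 2" .
  have S2: "2 * S = \<tau>^2 + nr^2 - 2 * (\<tau> * f')" unfolding S_def by (simp add: power2_diff algebra_simps)
  have "q * z \<le> 2 * S" using h unfolding S2 by (simp add: field_simps)
  moreover have "e0 * z \<le> q * z" using assms by (intro mult_right_mono) auto
  ultimately have es: "e0 * z \<le> 2 * S" by linarith
  have "\<tau> * Lc \<le> tmax * (2 * LF)" using assms by (intro mult_mono) auto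
  then have "M^2 + \<tau> * Lc \<le> \<Lambda>" unfolding \<Lambda>_def by (simp add: mult.commute mult.left_commute)
  then have G: "G \<le> \<Lambda> * z" using assms by (meson mult_right_mono order_trans)
  have L0: "\<Lambda> \<ge> 0" using \<open>M^2 + \<tau> * Lc \<le> \<Lambda>\<close> assms by (smt (verit) mult_pos_pos zero_le_power2)
  have "z \<le> 2 * S / e0" using es assms(9) by (simp add: field_simps)
  then have "\<Lambda> * z \<le> \<Lambda> * (2 * S / e0)" using L0 by (rule mult_left_mono)
  then have "4 * G \<le> 4 * (\<Lambda> * (2 * S / e0))" using G by linarith
  also have "\<dots> = 8 * \<Lambda> / e0 * S" by (simp add: field_simps)
  finally show ?thesis unfolding S_def \<Lambda>_def .
qed
theorem theorem6:
  fixes F :: "real^'n \<Rightarrow> real^'m"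
    and J :: "real^'n \<Rightarrow> real^'n^'m"
    and \<F> :: "(real^'n) set"
    and LF L M c \<eta> :: real
    and x :: "nat \<Rightarrow> real^'n"
    and tau eta Lk :: "nat \<Rightarrow> real"
    and k :: nat
  assumes deriv: "\<And>y. (F has_derivative (\<lambda>h. J y *v h)) (at y)"
    and Jcont: "continuous_on UNIV J"
    and Fclosed: "closed \<F>" and Fconvex: "convex \<F>" and Fint: "interior \<F> \<noteq> {}"
    and level: "{y. f1 F y \<le> f1 F (x 0)} \<subseteq> \<F>"
    and inF: "\<And>i. x i \<in> \<F>"
    and lip: "\<And>y z. y \<in> \<F> \<Longrightarrow> z \<in> \<F> \<Longrightarrow> frob_norm (Jhat J y - Jhat J z) \<le> LF * norm (y - z)"
    and Mpos: "M > 0"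
    and bnd: "\<And>y. y \<in> \<F> \<Longrightarrow> spec_norm (Jhat J y) \<le> M"
    and Lpos: "0 < L" and LleLF: "L \<le> LF"
    and taupos: "\<And>i. tau i > 0"
    and etapos: "\<And>i. eta i > 0"
    and cpos: "c > 0"
    and etac: "\<And>i. eta i * (2 - eta i) \<ge> c"
    and scheme: "scheme1 F J LF L x tau eta Lk"
    and argmin: "\<exists>j. \<eta> = eta j \<and> (\<forall>i. eta j * (2 - eta j) \<le> eta i * (2 - eta i))"
    and kpos: "k \<ge> 1"
  shows "Min ((\<lambda>i. (norm (grad (f2 F) (x i)))^2) ` {..<k})
         \<le> 8 * (2 * LF * Max (tau ` {..<k}) + M^2) / (\<eta> * (2 - \<eta>) * real k)
           * (\<Sum>i<k. (1/2) * (tau i - f1 F (x i))^2 + tau i * (f1 F (x i) - f1 F (x (Suc i))))"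
proof -
  define e0 where "e0 = \<eta> * (2 - \<eta>)"
  define \<Lambda> where "\<Lambda> = 2 * LF * Max (tau ` {..<k}) + M^2"
  define S where "S i = (1/2) * (tau i - f1 F (x i))^2 + tau i * (f1 F (x i) - f1 F (x (Suc i)))" for i
  define gr where "gr i = (norm (grad (f2 F) (x i)))^2" for i
  have e0c: "e0 \<ge> c" using argmin etac unfolding e0_def by auto
  have e0pos: "e0 > 0" using e0c cpos by linarith
  have e0le: "e0 \<le> eta i * (2 - eta i)" for i using argmin unfolding e0_def by auto
  have step: "gr i \<le> 8 * \<Lambda> / e0 * S i" if ik: "i < k" for i
  proof -
    have sc: "x (Suc i) = upd F J (x i) (Lk i) (tau i) (eta i)"
      "f1 F (x (Suc i)) \<le> psi F J (x i) (Lk i) (tau i) (x (Suc i))"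
      using scheme[unfolded scheme1_def, rule_format, of i] by auto
    have Lb: "L \<le> Lk i \<and> Lk i \<le> 2 * LF" by (rule Lk_bnd[OF scheme Lpos LleLF])
    define Jm where "Jm = Jhat J (x i)"
    define r where "r = Fhat F (x i)"
    define t where "t = tau i * Lk i"
    have tpos: "t > 0" using taupos[of i] Lb Lpos unfolding t_def by simp
    have Jb: "norm (Jm *v v) \<le> M * norm v" for v
    proof -
      have "norm (Jm *v v) \<le> onorm (\<lambda>v. Jm *v v) * norm v"
        by (rule onorm[OF matrix_vector_mul_bounded_linear])
      also have "\<dots> \<le> M * norm v" using bnd[OF inF[of i]]
        unfolding Jm_def spec_norm_def by (intro mult_right_mono) auto
      finally show ?thesis .
    qed
    define u where "u = matrix_inv (transpose Jm ** Jm + t *\<^sub>R mat 1) *v (transpose Jm *v r)"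
    define g where "g = transpose Jm *v r"
    note K = key[OF tpos Jb less_imp_le[OF Mpos], of r, folded u_def g_def]
    have xd: "x (Suc i) - x i = - (eta i *\<^sub>R u)"
      unfolding sc(1) upd_def u_def Jm_def r_def t_def by simp
    have "psi F J (x i) (Lk i) (tau i) (x (Suc i))
        = tau i / 2 + (norm (r + Jm *v (- (eta i *\<^sub>R u)))^2 + t * norm (- (eta i *\<^sub>R u))^2) / (2 * tau i)"
      unfolding psi_def xd r_def[symmetric] Jm_def[symmetric] t_def using taupos[of i]
      by (simp add: field_simps)
    also have "\<dots> = tau i / 2 + ((f1 F (x i))^2 - eta i * (2 - eta i) * (g \<bullet> u)) / (2 * tau i)"
      unfolding K(3) by (simp add: f1_def r_def)
    finally have ps: "f1 F (x (Suc i)) \<le> tau i / 2 + ((f1 F (x i))^2 - eta i * (2 - eta i) * (g \<bullet> u)) / (2 * tau i)"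
      using sc(2) by simp
    have gr: "gr i = 4 * (norm g)^2"
      unfolding gr_def grad_f2[OF deriv] g_def Jm_def r_def by (simp add: power_mult_distrib)
    have tmax: "tau i \<le> Max (tau ` {..<k})" using ik by (intro Max_ge) auto
    have "4 * (norm g)^2 \<le> 8 * (2 * LF * Max (tau ` {..<k}) + M^2) / e0 * ((1/2) * (tau i - f1 F (x i))^2 + tau i * (f1 F (x i) - f1 F (x (Suc i))))"
      by (rule arith_step[OF taupos[of i] _ _ tmax K(2) _ ps e0le e0pos])
         (use Lb Lpos K(1) in \<open>auto simp: t_def\<close>)
    then show ?thesis unfolding gr \<Lambda>_def S_def .
  qed
  have fin: "finite (gr ` {..<k})" "gr ` {..<k} \<noteq> {}" using kpos by (auto simp: lessThan_empty_iff)
  have "real k * Min (gr ` {..<k}) = (\<Sum>i<k. Min (gr ` {..<k}))" by simp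
  also have "\<dots> \<le> (\<Sum>i<k. gr i)" by (intro sum_mono Min_le) auto
  also have "\<dots> \<le> (\<Sum>i<k. 8 * \<Lambda> / e0 * S i)" by (intro sum_mono step) auto
  also have "\<dots> = 8 * \<Lambda> / e0 * (\<Sum>i<k. S i)" by (simp add: sum_distrib_left)
  finally have "real k * Min (gr ` {..<k}) \<le> 8 * \<Lambda> / e0 * (\<Sum>i<k. S i)" .
  then have "Min (gr ` {..<k}) \<le> 8 * \<Lambda> / e0 * (\<Sum>i<k. S i) / real k"
    using kpos by (subst pos_le_divide_eq) (auto simp: mult.commute)
  also have "\<dots> = 8 * \<Lambda> / (e0 * real k) * (\<Sum>i<k. S i)" by simp
  finally show ?thesis unfolding gr_def S_def \<Lambda>_def e0_def .
qed

end
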